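(* Let $\Sigma$ be a finite alphabet with $|\Sigma|\ge2$, $n\ge1$, and $\rho_1,\rho_2,\rho_3>0$ with $\rho_1+\rho_2+\rho_3\le1$. For $0<\varepsilon<1$, the $\varepsilon$-mixing time $\tau(\varepsilon)$ of the lazy Markov chain $L^{\mathfrak{A}(n)}_{\rho_1,\rho_2,\rho_3}$ satisfies $$\tau(\varepsilon)\le\max\left(\left\lceil\frac{n}{\rho_1}\Big(\log n+\log\frac{1}{\rho_1\varepsilon}\Big)\right\rceil,\ \left\lceil\frac{n}{\rho_2}\Big(\log n+\log\frac{1}{\rho_2\varepsilon}\Big)\right\rceil,\ \left\lceil\frac{|\Sigma|n^2}{\rho_3}\Big(\log(|\Sigma|n^2)+\log\frac{1}{\rho_3\varepsilon}\Big)\right\rceil\right).$$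
   Context: A non-deterministic automaton (NFA) over $\Sigma$ is a tuple $(Q,\Sigma,\Delta,I,F)$ with $Q$ a finite set of states, $\Delta\subseteq Q\times\Sigma\times Q$, $I,F\subseteq Q$. $\mathfrak{A}(n)$ is the set of all NFAs over $\Sigma$ with state set $Q=\{1,\dots,n\}$. For $\mathcal{A}\in\mathfrak{A}(n)$: $\mathsf{Ch_{init}}(\mathcal{A},q)$ toggles membership of $q$ in $I$; $\mathsf{Ch_{final}}(\mathcal{A},q)$ toggles membership of $q$ in $F$; $\mathsf{Ch_{trans}}(\mathcal{A},(p,a,q))$ toggles membership of $(p,a,q)$ in $\Delta$. The matrix $S=S^{\mathfrak{A}(n)}_{\rho_1,\rho_2,\rho_3}$ on $\mathfrak{A}(n)$ is: for $x\ne y$, $S(x,y)=\rho_1/n$ if $y=\mathsf{Ch_{init}}(x,q)$ for some $q$; $\rho_2/n$ if $y=\mathsf{Ch_{final}}(x,q)$ for some $q$; $\rho_3/(|\Sigma|n^2)$ if $y=\mathsf{Ch_{trans}}(x,(p,a,q))$ for some $(p,a,q)$; $0$ otherwise; and $S(x,x)=1-\sum_{y\ne x}S(x,y)$. The lazy chain $L=L^{\mathfrak{A}(n)}_{\rho_1,\rho_2,\rho_3}$ is $L(x,y)=\frac12 S(x,y)$ for $x\ne y$ and $L(x,x)=\frac12+\frac12S(x,x)$; its stationary distribution $\pi$ is uniform on $\mathfrak{A}(n)$. The $\varepsilon$-mixing time is $\tau(\varepsilon)=\min\{t:\max_{x\in\mathfrak{A}(n)}\|L^t(x,\cdot)-\pi\|_{TV}\le\varepsilon\}$,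 where $\|\cdot\|_{TV}$ is total variation distance. $\log$ denotes the natural logarithm. *)

theory Defs
  imports Complex_Main
begin

text \<open>An NFA over alphabet Sig with state set {1..n}, represented by (I, F, Delta).\<close>
type_synonym 'a nfa = "nat set \<times> nat set \<times> (nat \<times> 'a \<times> nat) set"

definition nfas :: "'a set \<Rightarrow> nat \<Rightarrow> 'a nfa set" where
  "nfas Sig n = {(I, F, D). I \<subseteq> {1..n} \<and> F \<subseteq> {1..n} \<and> D \<subseteq> {1..n} \<times> Sig \<times> {1..n}}"

definition toggle :: "'b \<Rightarrow> 'b set \<Rightarrow> 'b set" where
  "toggle x A = (if x \<in> A then A - {x} else insert x A)"

definition ch_init :: "'a nfa \<Rightarrow> nat \<Rightarrow> 'a nfa" where
  "ch_init A q = (case A of (I, F, D) \<Rightarrow> (toggle q I, F, D))"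

definition ch_final :: "'a nfa \<Rightarrow> nat \<Rightarrow> 'a nfa" where
  "ch_final A q = (case A of (I, F, D) \<Rightarrow> (I, toggle q F, D))"

definition ch_trans :: "'a nfa \<Rightarrow> nat \<times> 'a \<times> nat \<Rightarrow> 'a nfa" where
  "ch_trans A t = (case A of (I, F, D) \<Rightarrow> (I, F, toggle t D))"

definition S_off :: "'a set \<Rightarrow> nat \<Rightarrow> real \<Rightarrow> real \<Rightarrow> real \<Rightarrow> 'a nfa \<Rightarrow> 'a nfa \<Rightarrow> real" where
  "S_off Sig n r1 r2 r3 x y =
     (if \<exists>q\<in>{1..n}. y = ch_init x q then r1 / real n
      else if \<exists>q\<in>{1..n}. y = ch_final x q then r2 / real n
      else if \<exists>t\<in>{1..n} \<times> Sig \<times> {1..n}. y = ch_trans x t then r3 / (real (card Sig) * real n ^ 2)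
      else 0)"

definition S_mat :: "'a set \<Rightarrow> nat \<Rightarrow> real \<Rightarrow> real \<Rightarrow> real \<Rightarrow> 'a nfa \<Rightarrow> 'a nfa \<Rightarrow> real" where
  "S_mat Sig n r1 r2 r3 x y =
     (if x \<noteq> y then S_off Sig n r1 r2 r3 x y
      else 1 - (\<Sum>z\<in>nfas Sig n - {x}. S_off Sig n r1 r2 r3 x z))"

definition L_mat :: "'a set \<Rightarrow> nat \<Rightarrow> real \<Rightarrow> real \<Rightarrow> real \<Rightarrow> 'a nfa \<Rightarrow> 'a nfa \<Rightarrow> real" where
  "L_mat Sig n r1 r2 r3 x y =
     (if x \<noteq> y then S_mat Sig n r1 r2 r3 x y / 2
      else 1 / 2 + S_mat Sig n r1 r2 r3 x x / 2)"

fun L_pow :: "'a set \<Rightarrow> nat \<Rightarrow> real \<Rightarrow> real \<Rightarrow> real \<Rightarrow> nat \<Rightarrow> 'a nfa \<Rightarrow> 'a nfa \<Rightarrow> real" where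
  "L_pow Sig n r1 r2 r3 0 x y = (if x = y then 1 else 0)"
| "L_pow Sig n r1 r2 r3 (Suc t) x y =
     (\<Sum>z\<in>nfas Sig n. L_pow Sig n r1 r2 r3 t x z * L_mat Sig n r1 r2 r3 z y)"

definition unif :: "'a set \<Rightarrow> nat \<Rightarrow> 'a nfa \<Rightarrow> real" where
  "unif Sig n y = 1 / real (card (nfas Sig n))"

definition tv_dist :: "'a set \<Rightarrow> nat \<Rightarrow> real \<Rightarrow> real \<Rightarrow> real \<Rightarrow> nat \<Rightarrow> 'a nfa \<Rightarrow> real" where
  "tv_dist Sig n r1 r2 r3 t x =
     (1 / 2) * (\<Sum>y\<in>nfas Sig n. \<bar>L_pow Sig n r1 r2 r3 t x y - unif Sig n y\<bar>)"

definition mixed :: "'a set \<Rightarrow> nat \<Rightarrow> real \<Rightarrow> real \<Rightarrow> real \<Rightarrow> real \<Rightarrow> nat \<Rightarrow> bool" where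
  "mixed Sig n r1 r2 r3 \<epsilon> t = (\<forall>x\<in>nfas Sig n. tv_dist Sig n r1 r2 r3 t x \<le> \<epsilon>)"

definition mixing_time :: "'a set \<Rightarrow> nat \<Rightarrow> real \<Rightarrow> real \<Rightarrow> real \<Rightarrow> real \<Rightarrow> nat" where
  "mixing_time Sig n r1 r2 r3 \<epsilon> = (LEAST t. mixed Sig n r1 r2 r3 \<epsilon> t)"

end

theory Submission
  imports Defs
begin



datatype 'a coord = CI nat | CF nat | CT "nat \<times> 'a \<times> nat"

definition coords :: "'a set \<Rightarrow> nat \<Rightarrow> 'a coord set" where
  "coords Sig n = CI ` {1..n} \<union> CF ` {1..n} \<union> CT ` ({1..n} \<times> Sig \<times> {1..n})"

fun tog :: "'a coord \<Rightarrow> 'a nfa \<Rightarrow> 'a nfa" where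
  "tog (CI q) x = ch_init x q"
| "tog (CF q) x = ch_final x q"
| "tog (CT t) x = ch_trans x t"

fun mem :: "'a coord \<Rightarrow> 'a nfa \<Rightarrow> bool" where
  "mem (CI q) (I, F, D) = (q \<in> I)"
| "mem (CF q) (I, F, D) = (q \<in> F)"
| "mem (CT t) (I, F, D) = (t \<in> D)"

lemma toggle_toggle[simp]: "toggle a (toggle a A) = A"
  by (auto simp: toggle_def)
lemma toggle_neq[simp]: "toggle a A \<noteq> A"
  by (auto simp: toggle_def)
lemma toggle_inj: "toggle a A = toggle b A \<Longrightarrow> a = b"
  unfolding toggle_def by (auto split: if_splits)
lemma mem_toggle: "b \<in> toggle a A \<longleftrightarrow> (if b = a then b \<notin> A else b \<in> A)"
  by (auto simp: toggle_def)
lemma toggle_comm: "toggle a (toggle b A) = toggle b (toggle a A)"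
  by (auto simp: toggle_def)

lemma tog_tog[simp]: "tog c (tog c x) = x"
  by (cases c; cases x) (auto simp: ch_init_def ch_final_def ch_trans_def)
lemma tog_neq: "tog c x \<noteq> x"
  by (cases c; cases x) (auto simp: ch_init_def ch_final_def ch_trans_def)
lemma tog_comm: "tog c (tog d x) = tog d (tog c x)"
  by (cases c; cases d; cases x) (auto simp: ch_init_def ch_final_def ch_trans_def toggle_comm)
lemma tog_inj: "tog c x = tog d x \<Longrightarrow> c = d"
  by (cases c; cases d; cases x) (auto simp: ch_init_def ch_final_def ch_trans_def dest: toggle_inj)
lemma mem_tog: "mem c (tog d x) = (if c = d then \<not> mem c x else mem c x)"
  by (cases c; cases d; cases x) (auto simp: ch_init_def ch_final_def ch_trans_def mem_toggle)



lemma tog_V: "x \<in> nfas Sig n \<Longrightarrow> c \<in> coords Sig n \<Longrightarrow> tog c x \<in> nfas Sig n"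
  by (cases x) (auto simp: coords_def nfas_def ch_init_def ch_final_def ch_trans_def toggle_def)

lemma ext_V:
  assumes "x \<in> nfas Sig n" "y \<in> nfas Sig n" "\<forall>c\<in>coords Sig n. mem c x = mem c y"
  shows "x = y"
proof -
  obtain I F D where x: "x = (I,F,D)" by (cases x)
  obtain I' F' D' where y: "y = (I',F',D')" by (cases y)
  have s: "I \<subseteq> {1..n}" "I' \<subseteq> {1..n}" "F \<subseteq> {1..n}" "F' \<subseteq> {1..n}"
     "D \<subseteq> {1..n} \<times> Sig \<times> {1..n}" "D' \<subseteq> {1..n} \<times> Sig \<times> {1..n}"
    using assms(1,2) by (auto simp: nfas_def x y)
  have hI: "\<And>q. q \<in> {1..n} \<Longrightarrow> (q \<in> I) = (q \<in> I')"
  proof -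
    fix q assume "q \<in> {1..n}"
    hence "CI q \<in> coords Sig n" by (simp add: coords_def)
    hence "mem (CI q) x = mem (CI q) y" using assms(3) by blast
    thus "(q \<in> I) = (q \<in> I')" by (simp add: x y)
  qed
  have hF: "\<And>q. q \<in> {1..n} \<Longrightarrow> (q \<in> F) = (q \<in> F')"
  proof -
    fix q assume "q \<in> {1..n}"
    hence "CF q \<in> coords Sig n" by (simp add: coords_def)
    hence "mem (CF q) x = mem (CF q) y" using assms(3) by blast
    thus "(q \<in> F) = (q \<in> F')" by (simp add: x y)
  qed
  have hD: "\<And>t. t \<in> {1..n} \<times> Sig \<times> {1..n} \<Longrightarrow> (t \<in> D) = (t \<in> D')"
  proof -
    fix t assume "t \<in> {1..n} \<times> Sig \<times> {1..n}"
    hence "CT t \<in> coords Sig n" by (simp add: coords_def)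
    hence "mem (CT t) x = mem (CT t) y" using assms(3) by blast
    thus "(t \<in> D) = (t \<in> D')" by (simp add: x y)
  qed
  have "I = I'" using s hI by blast
  moreover have "F = F'" using s hF by blast
  moreover have "D = D'" using s(5,6) hD by blast
  ultimately show ?thesis using x y by simp
qed

definition wt :: "'a set \<Rightarrow> nat \<Rightarrow> real \<Rightarrow> real \<Rightarrow> real \<Rightarrow> 'a coord \<Rightarrow> real" where
  "wt Sig n r1 r2 r3 c = (case c of CI q \<Rightarrow> r1 / real n | CF q \<Rightarrow> r2 / real n
     | CT t \<Rightarrow> r3 / (real (card Sig) * real n ^ 2))"

lemma S_off_tog:
  assumes "c \<in> coords Sig n"
  shows "S_off Sig n r1 r2 r3 x (tog c x) = wt Sig n r1 r2 r3 c"
proof -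
  obtain I F D where x: "x = (I,F,D)" by (cases x)
  show ?thesis
  proof (cases c)
    case (CI q) then show ?thesis using assms x by (auto simp: S_off_def coords_def wt_def)
  next
    case (CF q) then show ?thesis using assms x
      by (auto simp: S_off_def coords_def wt_def ch_init_def ch_final_def)
  next
    case (CT t) then show ?thesis using assms x
      by (auto simp: S_off_def coords_def wt_def ch_init_def ch_final_def ch_trans_def)
  qed
qed

lemma S_off_zero:
  assumes a: "\<forall>c\<in>coords Sig n. y \<noteq> tog c x"
  shows "S_off Sig n r1 r2 r3 x y = 0"
proof -
  have 1: "\<not>(\<exists>q\<in>{1..n}. y = ch_init x q)"
  proof
    assume "\<exists>q\<in>{1..n}. y = ch_init x q"
    then obtain q where "q\<in>{1..n}" "y = ch_init x q" by blast
    hence "CI q \<in> coords Sig n" "y = tog (CI q) x" by (auto simp: coords_def)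
    with a show False by blast
  qed
  have 2: "\<not>(\<exists>q\<in>{1..n}. y = ch_final x q)"
  proof
    assume "\<exists>q\<in>{1..n}. y = ch_final x q"
    then obtain q where "q\<in>{1..n}" "y = ch_final x q" by blast
    hence "CF q \<in> coords Sig n" "y = tog (CF q) x" by (auto simp: coords_def)
    with a show False by blast
  qed
  have 3: "\<not>(\<exists>t\<in>{1..n} \<times> Sig \<times> {1..n}. y = ch_trans x t)"
  proof
    assume "\<exists>t\<in>{1..n} \<times> Sig \<times> {1..n}. y = ch_trans x t"
    then obtain t where "t\<in>{1..n} \<times> Sig \<times> {1..n}" "y = ch_trans x t" by blast
    hence "CT t \<in> coords Sig n" "y = tog (CT t) x" by (auto simp: coords_def)
    with a show False by blast
  qed
  show ?thesis unfolding S_off_def using 1 2 3 by simp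
qed

lemma finite_nfas: "finite Sig \<Longrightarrow> finite (nfas Sig n)"
proof -
  assume f: "finite Sig"
  have "nfas Sig n = Pow {1..n} \<times> Pow {1..n} \<times> Pow ({1..n} \<times> Sig \<times> {1..n})"
    by (auto simp: nfas_def)
  thus ?thesis using f by simp
qed

lemma finite_coords: "finite Sig \<Longrightarrow> finite (coords Sig n)"
  by (simp add: coords_def)

lemma sum_coords:
  assumes "finite Sig"
  shows "(\<Sum>c\<in>coords Sig n. f c) = (\<Sum>q\<in>{1..n}. f (CI q)) + (\<Sum>q\<in>{1..n}. f (CF q))
     + (\<Sum>t\<in>{1..n} \<times> Sig \<times> {1..n}. f (CT t))"
proof -
  have a: "sum f (CI ` {1..n} \<union> CF ` {1..n} \<union> CT ` ({1..n} \<times> Sig \<times> {1..n}))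
     = sum f (CI ` {1..n} \<union> CF ` {1..n}) + sum f (CT ` ({1..n} \<times> Sig \<times> {1..n}))"
    by (rule sum.union_disjoint) (use assms in auto)
  have b: "sum f (CI ` {1..n} \<union> CF ` {1..n}) = sum f (CI ` {1..n}) + sum f (CF ` {1..n})"
    by (rule sum.union_disjoint) auto
  show ?thesis unfolding coords_def a b
    by (simp add: sum.reindex inj_on_def)
qed




locale chain =
  fixes Sig :: "'a set" and n :: nat and r1 r2 r3 :: real
  assumes fin: "finite Sig" and sig: "card Sig \<ge> 1" and n1: "n \<ge> 1"
    and p1: "r1 \<ge> 0" and p2: "r2 \<ge> 0" and p3: "r3 \<ge> 0" and tot: "r1 + r2 + r3 \<le> 1"
begin

abbreviation "V \<equiv> nfas Sig n"
abbreviation "C \<equiv> coords Sig n"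
abbreviation "w \<equiv> wt Sig n r1 r2 r3"
abbreviation "W \<equiv> (\<Sum>c\<in>C. w c)"
abbreviation "Lm \<equiv> L_mat Sig n r1 r2 r3"
abbreviation "So \<equiv> S_off Sig n r1 r2 r3"

definition Lop :: "('a nfa \<Rightarrow> real) \<Rightarrow> 'a nfa \<Rightarrow> real" where
  "Lop g y = (\<Sum>z\<in>V. g z * Lm z y)"
definition Rop :: "'a coord \<Rightarrow> ('a nfa \<Rightarrow> real) \<Rightarrow> 'a nfa \<Rightarrow> real" where
  "Rop c g y = (g y + g (tog c y)) / 2"
definition nrm :: "('a nfa \<Rightarrow> real) \<Rightarrow> real" where
  "nrm g = (\<Sum>y\<in>V. \<bar>g y\<bar>)"

lemma finV: "finite V" using finite_nfas[OF fin] .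
lemma finC: "finite C" using finite_coords[OF fin] .

lemma w_nonneg: "w c \<ge> 0"
  using p1 p2 p3 by (cases c) (auto simp: wt_def)

lemma W_eq: "W = r1 + r2 + r3"
proof -
  have c: "card ({1..n} \<times> Sig \<times> {1..n}) = n * card Sig * n"
    by (simp add: card_cartesian_product)
  have "real (card Sig) * real n ^ 2 \<noteq> 0" using sig n1 by simp
  then show ?thesis
    using n1 sig unfolding sum_coords[OF fin] by (simp add: wt_def card_cartesian_product power2_eq_square)
qed

lemma W_le: "W \<le> 1" using W_eq tot by simp

lemma inj_togs: "inj_on (\<lambda>c. tog c y) A"
  by (auto simp: inj_on_def dest: tog_inj)

lemma img_togs: assumes y: "y \<in> V" shows "(\<lambda>c. tog c y) ` C \<subseteq> V - {y}"
proof
  fix z assume "z \<in> (\<lambda>c. tog c y) ` C"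
  then obtain c where c: "c \<in> C" "z = tog c y" by blast
  show "z \<in> V - {y}" using tog_V[OF y c(1)] tog_neq[of c y] c(2) by simp
qed

lemma sum_Soff: assumes y: "y \<in> V" shows "(\<Sum>z\<in>V-{y}. So y z) = W"
proof -
  have "(\<Sum>z\<in>V-{y}. So y z) = (\<Sum>z\<in>(\<lambda>c. tog c y)`C. So y z)"
  proof (rule sum.mono_neutral_right)
    show "finite (V - {y})" using finV by simp
    show "(\<lambda>c. tog c y) ` C \<subseteq> V - {y}" using y by (rule img_togs)
    show "\<forall>i\<in>V - {y} - (\<lambda>c. tog c y) ` C. So y i = 0"
      by (auto intro!: S_off_zero)
  qed
  also have "\<dots> = (\<Sum>c\<in>C. So y (tog c y))"
    by (rule sum.reindex[OF inj_togs, unfolded comp_def])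
  also have "\<dots> = W" by (rule sum.cong) (auto simp: S_off_tog)
  finally show ?thesis .
qed

lemma Lm_diag: "y \<in> V \<Longrightarrow> Lm y y = 1/2 + (1 - W)/2"
  by (simp add: L_mat_def S_mat_def sum_Soff)

lemma Lop_formula:
  assumes y: "y \<in> V"
  shows "Lop g y = (1 - W) * g y + (\<Sum>c\<in>C. w c * Rop c g y)"
proof -
  have "Lop g y = g y * Lm y y + (\<Sum>z\<in>V-{y}. g z * Lm z y)"
    unfolding Lop_def using y finV by (simp add: sum.remove)
  also have "(\<Sum>z\<in>V-{y}. g z * Lm z y) = (\<Sum>z\<in>V-{y}. g z * So z y / 2)"
    by (rule sum.cong) (auto simp: L_mat_def S_mat_def)
  also have "\<dots> = (\<Sum>z\<in>(\<lambda>c. tog c y)`C. g z * So z y / 2)"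
  proof (rule sum.mono_neutral_right)
    show "finite (V - {y})" using finV by simp
    show "(\<lambda>c. tog c y) ` C \<subseteq> V - {y}" using y by (rule img_togs)
    show "\<forall>i\<in>V - {y} - (\<lambda>c. tog c y) ` C. g i * So i y / 2 = 0"
    proof
      fix i assume i: "i \<in> V - {y} - (\<lambda>c. tog c y) ` C"
      have "\<forall>c\<in>C. y \<noteq> tog c i"
      proof (intro ballI notI)
        fix c assume "c \<in> C" "y = tog c i"
        hence "i = tog c y" by simp
        with \<open>c \<in> C\<close> i show False by blast
      qed
      thus "g i * So i y / 2 = 0" by (simp add: S_off_zero)
    qed
  qed
  also have "\<dots> = (\<Sum>c\<in>C. g (tog c y) * So (tog c y) y / 2)"
    by (rule sum.reindex[OF inj_togs, unfolded comp_def])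
  also have "\<dots> = (\<Sum>c\<in>C. g (tog c y) * w c / 2)"
  proof (rule sum.cong)
    fix c assume "c \<in> C"
    have "So (tog c y) y = So (tog c y) (tog c (tog c y))" by simp
    also have "\<dots> = w c" using \<open>c \<in> C\<close> by (rule S_off_tog)
    finally show "g (tog c y) * So (tog c y) y / 2 = g (tog c y) * w c / 2" by simp
  qed simp
  finally have 1: "Lop g y = g y * (1/2 + (1 - W)/2) + (\<Sum>c\<in>C. g (tog c y) * w c / 2)"
    using Lm_diag[OF y] by simp
  have 2: "(\<Sum>c\<in>C. w c * Rop c g y) = W * g y / 2 + (\<Sum>c\<in>C. g (tog c y) * w c / 2)"
  proof -
    have "(\<Sum>c\<in>C. w c * Rop c g y) = (\<Sum>c\<in>C. w c * g y / 2 + g (tog c y) * w c / 2)"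
      unfolding Rop_def by (rule sum.cong) (auto simp: algebra_simps add_divide_distrib)
    also have "\<dots> = (\<Sum>c\<in>C. w c * g y / 2) + (\<Sum>c\<in>C. g (tog c y) * w c / 2)"
      by (rule sum.distrib)
    also have "(\<Sum>c\<in>C. w c * g y / 2) = W * g y / 2"
      by (simp add: sum_distrib_right[symmetric] sum_divide_distrib[symmetric])
    finally show ?thesis .
  qed
  show ?thesis unfolding 1 2 by (simp add: field_simps)
qed

end



context chain begin

lemma sum_tog: assumes c: "c \<in> C" shows "(\<Sum>y\<in>V. f (tog c y)) = (\<Sum>y\<in>V. f y)"
  by (rule sum.reindex_bij_witness[where i="tog c" and j="tog c"]) (auto simp: tog_V[OF _ c])

lemma Rop_sum: assumes c: "c \<in> C" shows "(\<Sum>y\<in>V. Rop c g y) = (\<Sum>y\<in>V. g y)"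
proof -
  have "(\<Sum>y\<in>V. Rop c g y) = ((\<Sum>y\<in>V. g y) + (\<Sum>y\<in>V. g (tog c y))) / 2"
    unfolding Rop_def sum_divide_distrib[symmetric] by (simp add: sum.distrib)
  also have "(\<Sum>y\<in>V. g (tog c y)) = (\<Sum>y\<in>V. g y)" by (rule sum_tog[OF c])
  finally show ?thesis by simp
qed

lemma Rop_nrm: assumes c: "c \<in> C" shows "nrm (Rop c g) \<le> nrm g"
proof -
  have "nrm (Rop c g) \<le> (\<Sum>y\<in>V. (\<bar>g y\<bar> + \<bar>g (tog c y)\<bar>) / 2)"
    unfolding nrm_def Rop_def by (rule sum_mono) (simp add: abs_triangle_ineq)
  also have "\<dots> = ((\<Sum>y\<in>V. \<bar>g y\<bar>) + (\<Sum>y\<in>V. \<bar>g (tog c y)\<bar>)) / 2"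
    unfolding sum_divide_distrib[symmetric] by (simp add: sum.distrib)
  also have "\<dots> = nrm g" unfolding nrm_def using sum_tog[OF c, of "\<lambda>y. \<bar>g y\<bar>"] by simp
  finally show ?thesis .
qed

definition anti :: "'a coord \<Rightarrow> ('a nfa \<Rightarrow> real) \<Rightarrow> bool" where
  "anti k h = (\<forall>y\<in>V. h (tog k y) = - h y)"

lemma Lop_anti:
  assumes k: "k \<in> C" and a: "anti k h"
  shows "anti k (Lop h)"
  unfolding anti_def
proof
  fix y assume y: "y \<in> V"
  have ky: "tog k y \<in> V" using tog_V[OF y k] .
  have R: "Rop c h (tog k y) = - Rop c h y" if c: "c \<in> C" for c
  proof -
    have cy: "tog c y \<in> V" using tog_V[OF y c] .
    have "h (tog k (tog c y)) = - h (tog c y)"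
      using a cy unfolding anti_def by blast
    hence "h (tog c (tog k y)) = - h (tog c y)" by (metis tog_comm)
    moreover have "h (tog k y) = - h y" using a y unfolding anti_def by simp
    ultimately show ?thesis unfolding Rop_def by (simp add: field_simps)
  qed
  have "Lop h (tog k y) = (1 - W) * h (tog k y) + (\<Sum>c\<in>C. w c * Rop c h (tog k y))"
    by (rule Lop_formula[OF ky])
  also have "\<dots> = - ((1 - W) * h y + (\<Sum>c\<in>C. w c * Rop c h y))"
    using a y R unfolding anti_def by (simp add: sum_negf[symmetric])
  also have "\<dots> = - Lop h y" using Lop_formula[OF y] by simp
  finally show "Lop h (tog k y) = - Lop h y" .
qed

lemma w_le: "c \<in> C \<Longrightarrow> w c \<le> W"
  using finC w_nonneg by (intro member_le_sum) auto

lemma Lop_nrm: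
  assumes k: "k \<in> C" and a: "anti k h"
  shows "nrm (Lop h) \<le> (1 - w k) * nrm h"
proof -
  have pt: "\<bar>Lop h y\<bar> \<le> (1 - W) * \<bar>h y\<bar> + (\<Sum>c\<in>C-{k}. w c * \<bar>Rop c h y\<bar>)" if y: "y \<in> V" for y
  proof -
    have "Rop k h y = 0" using a y unfolding anti_def Rop_def by simp
    hence "(\<Sum>c\<in>C. w c * Rop c h y) = (\<Sum>c\<in>C-{k}. w c * Rop c h y)"
      using finC k by (simp add: sum.remove)
    hence "Lop h y = (1 - W) * h y + (\<Sum>c\<in>C-{k}. w c * Rop c h y)"
      using Lop_formula[OF y] by simp
    also have "\<bar>\<dots>\<bar> \<le> \<bar>(1 - W) * h y\<bar> + \<bar>\<Sum>c\<in>C-{k}. w c * Rop c h y\<bar>"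
      by (rule abs_triangle_ineq)
    also have "\<bar>(1 - W) * h y\<bar> = (1 - W) * \<bar>h y\<bar>" using W_le by (simp add: abs_mult)
    also have "\<bar>\<Sum>c\<in>C-{k}. w c * Rop c h y\<bar> \<le> (\<Sum>c\<in>C-{k}. \<bar>w c * Rop c h y\<bar>)"
      by (rule sum_abs)
    also have "\<dots> = (\<Sum>c\<in>C-{k}. w c * \<bar>Rop c h y\<bar>)"
      using w_nonneg by (simp add: abs_mult)
    finally show ?thesis by simp
  qed
  have "nrm (Lop h) \<le> (\<Sum>y\<in>V. (1 - W) * \<bar>h y\<bar> + (\<Sum>c\<in>C-{k}. w c * \<bar>Rop c h y\<bar>))"
    unfolding nrm_def by (rule sum_mono) (use pt in auto)
  also have "\<dots> = (1 - W) * nrm h + (\<Sum>c\<in>C-{k}. w c * nrm (Rop c h))"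
    unfolding nrm_def by (simp add: sum.distrib sum_distrib_left sum.swap[of _ "C-{k}"])
  also have "(\<Sum>c\<in>C-{k}. w c * nrm (Rop c h)) \<le> (\<Sum>c\<in>C-{k}. w c * nrm h)"
    by (rule sum_mono) (use w_nonneg Rop_nrm in \<open>auto intro: mult_left_mono\<close>)
  also have "(\<Sum>c\<in>C-{k}. w c * nrm h) = (W - w k) * nrm h"
    using finC k by (simp add: sum_distrib_right[symmetric] sum_diff1)
  finally show ?thesis by (simp add: algebra_simps)
qed

lemma nrm_nonneg: "nrm g \<ge> 0" unfolding nrm_def by (simp add: sum_nonneg)

lemma Lpow_anti:
  assumes k: "k \<in> C" and a: "anti k h"
  shows "anti k ((Lop^^t) h) \<and> nrm ((Lop^^t) h) \<le> (1 - w k)^t * nrm h"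
proof (induction t)
  case 0 then show ?case using a by simp
next
  case (Suc t)
  have wk: "1 - w k \<ge> 0" using w_le[OF k] W_le by simp
  have "nrm ((Lop^^Suc t) h) \<le> (1 - w k) * nrm ((Lop^^t) h)"
    using Lop_nrm[OF k] Suc by simp
  also have "\<dots> \<le> (1 - w k) * ((1 - w k)^t * nrm h)"
    using Suc wk by (intro mult_left_mono) auto
  finally show ?case using Lop_anti[OF k] Suc by simp
qed

lemma Lop_lin: "Lop (\<lambda>y. f y + (\<Sum>i\<in>I. g i y)) y = Lop f y + (\<Sum>i\<in>I. Lop (g i) y)"
  unfolding Lop_def by (simp add: distrib_right sum.distrib sum_distrib_right sum.swap[of _ I])

lemma Lpow_lin: "(Lop^^t) (\<lambda>y. f y + (\<Sum>i\<in>I. g i y)) y = (Lop^^t) f y + (\<Sum>i\<in>I. (Lop^^t) (g i) y)"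
proof (induction t arbitrary: y)
  case 0 then show ?case by simp
next
  case (Suc t)
  have "(Lop^^Suc t) (\<lambda>y. f y + (\<Sum>i\<in>I. g i y)) = Lop ((Lop^^t) (\<lambda>y. f y + (\<Sum>i\<in>I. g i y)))"
    by simp
  also have "(Lop^^t) (\<lambda>y. f y + (\<Sum>i\<in>I. g i y)) = (\<lambda>y. (Lop^^t) f y + (\<Sum>i\<in>I. (Lop^^t) (g i) y))"
    using Suc by auto
  finally show ?case by (simp add: Lop_lin)
qed

lemma Lpow_const:
  assumes "\<forall>y\<in>V. f y = a"
  shows "\<forall>y\<in>V. (Lop^^t) f y = a"
proof (induction t)
  case 0 then show ?case using assms by simp
next
  case (Suc t)
  show ?case
  proof
    fix y assume y: "y \<in> V"
    have "Rop c ((Lop^^t) f) y = a" if c: "c \<in> C" for c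
      using Suc y tog_V[OF y c] unfolding Rop_def by simp
    hence "Lop ((Lop^^t) f) y = (1 - W) * a + (\<Sum>c\<in>C. w c * a)"
      using Lop_formula[OF y] Suc y by simp
    also have "(\<Sum>c\<in>C. w c * a) = W * a" by (simp add: sum_distrib_right)
    also have "(1 - W) * a + W * a = a" by (simp add: algebra_simps)
    finally show "(Lop^^Suc t) f y = a" by simp
  qed
qed

lemma Lpow_eq: "L_pow Sig n r1 r2 r3 t x = (Lop^^t) (\<lambda>y. if x = y then 1 else 0)"
proof (induction t)
  case 0 then show ?case by (auto simp: fun_eq_iff)
next
  case (Suc t)
  have "(Lop^^Suc t) (\<lambda>y. if x = y then 1 else 0) = Lop (L_pow Sig n r1 r2 r3 t x)"
    using Suc by simp
  moreover have "L_pow Sig n r1 r2 r3 (Suc t) x = Lop (L_pow Sig n r1 r2 r3 t x)"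
    by (rule ext) (simp add: Lop_def)
  ultimately show ?case by simp
qed

end



fun Gf :: "'a coord list \<Rightarrow> ('a nfa \<Rightarrow> real) \<Rightarrow> nat \<Rightarrow> 'a nfa \<Rightarrow> real" where
  "Gf cs g 0 = g"
| "Gf cs g (Suc i) = (\<lambda>y. (Gf cs g i y + Gf cs g i (tog (cs!i) y)) / 2)"

lemma nth_notin_take: "distinct cs \<Longrightarrow> i < length cs \<Longrightarrow> cs ! i \<notin> set (take i cs)"
proof -
  assume d: "distinct cs" and i: "i < length cs"
  have "distinct (take i cs @ cs!i # drop (Suc i) cs)" using d id_take_nth_drop[OF i] by simp
  thus ?thesis by simp
qed

context chain begin

lemma Gf_Rop: "Gf cs g (Suc i) = Rop (cs!i) (Gf cs g i)"
  by (rule ext) (simp add: Rop_def)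

lemma G_sum:
  assumes sc: "set cs = C"
  shows "i \<le> length cs \<Longrightarrow> (\<Sum>y\<in>V. Gf cs g i y) = (\<Sum>y\<in>V. g y)"
proof (induction i)
  case 0 then show ?case by simp
next
  case (Suc i)
  have "cs ! i \<in> C" using Suc.prems sc nth_mem[of i cs] by simp
  hence "(\<Sum>y\<in>V. Gf cs g (Suc i) y) = (\<Sum>y\<in>V. Gf cs g i y)"
    unfolding Gf_Rop by (rule Rop_sum)
  also have "\<dots> = (\<Sum>y\<in>V. g y)" using Suc by simp
  finally show ?case .
qed

lemma G_nrm:
  assumes sc: "set cs = C"
  shows "i \<le> length cs \<Longrightarrow> nrm (Gf cs g i) \<le> nrm g"
proof (induction i)
  case 0 show ?case by (simp only: Gf.simps order_refl)
next
  case (Suc i)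
  have "cs ! i \<in> C" using Suc.prems sc nth_mem[of i cs] by simp
  hence "nrm (Gf cs g (Suc i)) \<le> nrm (Gf cs g i)"
    unfolding Gf_Rop by (rule Rop_nrm)
  also have "\<dots> \<le> nrm g" using Suc.IH Suc.prems by simp
  finally show ?case .
qed

lemma G_val:
  assumes x: "x \<in> V" and d: "distinct cs" and sc: "set cs = C"
  shows "i \<le> length cs \<Longrightarrow> y \<in> V \<Longrightarrow> Gf cs (\<lambda>y. if x = y then 1 else 0) i y =
     (if \<forall>c\<in>C - set (take i cs). mem c x = mem c y then 1 / 2^i else 0)"
proof (induction i arbitrary: y)
  case 0
  show ?case
  proof (cases "x = y")
    case True then show ?thesis by simp
  next
    case False
    hence "\<not> (\<forall>c\<in>C. mem c x = mem c y)" using ext_V[OF x 0(2)] by blast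
    then show ?thesis using False by simp
  qed
next
  case (Suc i)
  define k where "k = cs ! i"
  define U where "U = set (take i cs)"
  have il: "i < length cs" using Suc.prems by simp
  have kC: "k \<in> C" using nth_mem[OF il] sc unfolding k_def by simp
  have kU: "k \<notin> U" using nth_notin_take[OF d il] k_def U_def by simp
  have tk: "set (take (Suc i) cs) = insert k U"
    using il by (simp add: take_Suc_conv_app_nth k_def U_def)
  have yV: "y \<in> V" using Suc.prems by simp
  have kyV: "tog k y \<in> V" using tog_V[OF yV kC] .
  let ?d = "(\<lambda>y. if x = y then 1 else 0) :: 'a nfa \<Rightarrow> real"
  have IH1: "Gf cs ?d i y = (if \<forall>c\<in>C - U. mem c x = mem c y then 1 / 2^i else 0)"
    using Suc.IH[OF _ yV] il U_def by simp
  have IH2: "Gf cs ?d i (tog k y) = (if \<forall>c\<in>C - U. mem c x = mem c (tog k y) then 1 / 2^i else 0)"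
    using Suc.IH[OF _ kyV] il U_def by simp
  have G: "Gf cs ?d (Suc i) y = (Gf cs ?d i y + Gf cs ?d i (tog k y)) / 2"
    by (simp add: k_def)
  let ?A = "\<lambda>z. \<forall>c\<in>C - U. mem c x = mem c z"
  let ?A' = "\<forall>c\<in>C - insert k U. mem c x = mem c y"
  have goal: "Gf cs ?d (Suc i) y = (if ?A' then 1 / 2^Suc i else 0)"
  proof (cases ?A')
    case True
    show ?thesis
    proof (cases "mem k x = mem k y")
      case True2: True
      have a1: "?A y" using True True2 by blast
      have a2: "\<not> ?A (tog k y)"
      proof
        assume "?A (tog k y)"
        hence "mem k x = mem k (tog k y)" using kC kU by blast
        thus False using True2 by (simp add: mem_tog)
      qed
      have "Gf cs ?d i y = 1 / 2^i" unfolding IH1 using a1 by (rule if_P)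
      moreover have "Gf cs ?d i (tog k y) = 0" unfolding IH2 using a2 by (rule if_not_P)
      ultimately have "Gf cs ?d (Suc i) y = 1 / 2^Suc i" unfolding G by simp
      thus ?thesis by (simp only: if_P[OF True])
    next
      case False2: False
      have a1: "\<not> ?A y" using False2 kC kU by blast
      have a2: "?A (tog k y)"
      proof
        fix c assume c: "c \<in> C - U"
        show "mem c x = mem c (tog k y)"
        proof (cases "c = k")
          case ck: True
          thus ?thesis using False2 by (simp add: mem_tog)
        next
          case ck: False
          hence "mem c x = mem c y" using True c by blast
          thus ?thesis using ck by (simp add: mem_tog)
        qed
      qed
      have "Gf cs ?d i y = 0" unfolding IH1 using a1 by (rule if_not_P)
      moreover have "Gf cs ?d i (tog k y) = 1 / 2^i" unfolding IH2 using a2 by (rule if_P)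
      ultimately have "Gf cs ?d (Suc i) y = 1 / 2^Suc i" unfolding G by simp
      thus ?thesis by (simp only: if_P[OF True])
    qed
  next
    case False
    then obtain c where c: "c \<in> C" "c \<notin> insert k U" "mem c x \<noteq> mem c y" by blast
    have a1: "\<not> ?A y" using c by blast
    have "c \<noteq> k" using c by blast
    hence "mem c (tog k y) = mem c y" by (simp add: mem_tog)
    hence a2: "\<not> ?A (tog k y)" using c by blast
    have "Gf cs ?d i y = 0" unfolding IH1 using a1 by (rule if_not_P)
    moreover have "Gf cs ?d i (tog k y) = 0" unfolding IH2 using a2 by (rule if_not_P)
    ultimately have "Gf cs ?d (Suc i) y = 0" unfolding G by simp
    thus ?thesis by (simp only: if_not_P[OF False])
  qed
  show ?case unfolding tk by (rule goal)
qed

end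



context chain begin

lemma tv_bound:
  assumes x: "x \<in> V"
  shows "tv_dist Sig n r1 r2 r3 t x \<le> (\<Sum>c\<in>C. (1 - w c)^t)"
proof -
  obtain cs where sc: "set cs = C" and d: "distinct cs"
    using finite_distinct_list[OF finC] by blast
  define N where "N = length cs"
  define dl :: "'a nfa \<Rightarrow> real" where "dl = (\<lambda>y. if x = y then 1 else 0)"
  define G where "G = Gf cs dl"
  define h where "h = (\<lambda>i y. G i y - G (Suc i) y)"
  have csC: "cs ! i \<in> C" if "i < N" for i using nth_mem[of i cs] that sc N_def by simp
  have eq: "dl = (\<lambda>y. G N y + (\<Sum>i<N. h i y))"
  proof
    fix y
    have "(\<Sum>i<N. h i y) = G 0 y - G N y"
      unfolding h_def by (rule sum_lessThan_telescope')
    thus "dl y = G N y + (\<Sum>i<N. h i y)" by (simp add: G_def)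
  qed
  have tkN: "C - set (take N cs) = {}" using sc N_def by simp
  have GN: "G N y = 1 / 2^N" if y: "y \<in> V" for y
  proof -
    have a: "\<forall>c\<in>C - set (take N cs). mem c x = mem c y" using tkN by blast
    have "G N y = (if \<forall>c\<in>C - set (take N cs). mem c x = mem c y then 1 / 2^N else 0)"
      unfolding G_def dl_def by (rule G_val[OF x d sc _ y]) (simp add: N_def)
    thus ?thesis by (simp only: if_P[OF a])
  qed
  have sdl: "(\<Sum>y\<in>V. dl y) = 1" using x finV unfolding dl_def by simp
  have "(\<Sum>y\<in>V. G N y) = 1"
    using G_sum[OF sc, of N dl] sdl unfolding G_def N_def by simp
  moreover have "(\<Sum>y\<in>V. G N y) = real (card V) * (1 / 2^N)"
    using GN by simp
  ultimately have cardV: "real (card V) = 2^N" by (simp add: field_simps)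
  have un: "unif Sig n y = 1 / 2^N" for y unfolding unif_def cardV by simp
  have "(\<lambda>y. \<bar>dl y\<bar>) = dl" unfolding dl_def by (rule ext) simp
  hence ndl: "nrm dl = 1" unfolding nrm_def by (simp only: sdl)
  have diff: "L_pow Sig n r1 r2 r3 t x y - unif Sig n y = (\<Sum>i<N. (Lop^^t) (h i) y)"
    if y: "y \<in> V" for y
  proof -
    have "L_pow Sig n r1 r2 r3 t x y = (Lop^^t) dl y" unfolding Lpow_eq dl_def ..
    also have "\<dots> = (Lop^^t) (G N) y + (\<Sum>i<N. (Lop^^t) (h i) y)"
      by (subst eq) (rule Lpow_lin)
    also have "(Lop^^t) (G N) y = 1 / 2^N" using Lpow_const[of "G N" "1/2^N" t] GN y by blast
    finally show ?thesis using un by simp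
  qed
  have anti_h: "anti (cs!i) (h i)" for i
    unfolding anti_def h_def G_def by (simp add: field_simps)
  have nrm_h: "nrm (h i) \<le> 2" if i: "i < N" for i
  proof -
    have "nrm (h i) \<le> nrm (G i) + nrm (G (Suc i))"
      unfolding nrm_def h_def sum.distrib[symmetric] by (rule sum_mono) (rule abs_triangle_ineq4)
    also have "nrm (G i) \<le> 1" using G_nrm[OF sc, of i dl] i ndl unfolding G_def N_def by simp
    also have "nrm (G (Suc i)) \<le> 1" using G_nrm[OF sc, of "Suc i" dl] i ndl unfolding G_def N_def by simp
    finally show ?thesis by simp
  qed
  have hb: "nrm ((Lop^^t) (h i)) \<le> (1 - w (cs!i))^t * 2" if i: "i < N" for i
  proof -
    have wk: "0 \<le> 1 - w (cs!i)" using w_le[OF csC[OF i]] W_le by simp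
    have "nrm ((Lop^^t) (h i)) \<le> (1 - w (cs!i))^t * nrm (h i)"
      using Lpow_anti[OF csC[OF i] anti_h] by blast
    also have "\<dots> \<le> (1 - w (cs!i))^t * 2"
      using nrm_h[OF i] wk by (intro mult_left_mono) auto
    finally show ?thesis .
  qed
  have "tv_dist Sig n r1 r2 r3 t x = (1/2) * (\<Sum>y\<in>V. \<bar>\<Sum>i<N. (Lop^^t) (h i) y\<bar>)"
    unfolding tv_dist_def using diff by simp
  also have "\<dots> \<le> (1/2) * (\<Sum>y\<in>V. \<Sum>i<N. \<bar>(Lop^^t) (h i) y\<bar>)"
    by (intro mult_left_mono sum_mono sum_abs) auto
  also have "(\<Sum>y\<in>V. \<Sum>i<N. \<bar>(Lop^^t) (h i) y\<bar>) = (\<Sum>i<N. nrm ((Lop^^t) (h i)))"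
    unfolding nrm_def by (rule sum.swap)
  also have "(\<Sum>i<N. nrm ((Lop^^t) (h i))) \<le> (\<Sum>i<N. (1 - w (cs!i))^t * 2)"
    by (rule sum_mono) (use hb in auto)
  also have "(\<Sum>i<N. (1 - w (cs!i))^t * 2) = 2 * (\<Sum>i<N. (1 - w (cs!i))^t)"
    by (simp add: sum_distrib_left mult.commute)
  also have "(\<Sum>i<N. (1 - w (cs!i))^t) = (\<Sum>c\<in>C. (1 - w c)^t)"
    using sum.reindex_bij_betw[OF bij_betw_nth[OF d, of "{..<N}" C], of "\<lambda>c. (1 - w c)^t"]
      sc N_def by simp
  finally show ?thesis by simp
qed

end



lemma arith_term:
  fixes m r e :: real and T :: nat
  assumes m: "m \<ge> 1" and r: "0 < r" "r \<le> 1" and e: "0 < e"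
    and T: "real T \<ge> m / r * (ln m + ln (1 / (r * e)))"
  shows "m * (1 - r / m)^T \<le> r * e"
proof -
  have m0: "m > 0" using m by simp
  have rm: "r / m \<le> 1" using m r by (simp add: divide_le_eq)
  have "(1 - r/m)^T \<le> exp (- (r/m))^T"
  proof (rule power_mono)
    show "1 - r/m \<le> exp (- (r/m))" using exp_ge_add_one_self[of "- (r/m)"] by simp
    show "0 \<le> 1 - r/m" using rm by simp
  qed
  also have "\<dots> = exp (- (r/m) * real T)" by (simp add: exp_of_nat_mult[symmetric] mult.commute)
  also have "- (r/m) * real T \<le> - (ln m + ln (1 / (r * e)))"
  proof -
    have "(r/m) * (m / r * (ln m + ln (1 / (r * e)))) \<le> (r/m) * real T"
      using T r m0 by (intro mult_left_mono) auto
    moreover have "(r/m) * (m / r * (ln m + ln (1 / (r * e)))) = ln m + ln (1 / (r * e))"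
      using r m0 by (simp add: field_simps)
    ultimately show ?thesis by simp
  qed
  hence "exp (- (r/m) * real T) \<le> exp (- (ln m + ln (1 / (r * e))))" by simp
  also have "exp (- (ln m + ln (1 / (r * e)))) = r * e / m"
  proof -
    have "- (ln m + ln (1 / (r * e))) = ln (r * e / m)"
      using m0 r e by (simp add: ln_div)
    thus ?thesis using m0 r e by simp
  qed
  finally have "(1 - r/m)^T \<le> r * e / m" .
  hence "m * (1 - r/m)^T \<le> m * (r * e / m)" using m0 by (intro mult_left_mono) auto
  thus ?thesis using m0 by simp
qed

lemma E_nonneg:
  fixes m r e :: real
  assumes m: "m \<ge> 1" and r: "0 < r" "r \<le> 1" and e: "0 < e" "e < 1"
  shows "0 \<le> m / r * (ln m + ln (1 / (r * e)))"
proof -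
  have "r * e \<le> 1" using r e by (simp add: mult_le_one)
  hence "0 \<le> ln (1 / (r * e))" using r e by simp
  moreover have "0 \<le> ln m" using m by simp
  ultimately show ?thesis using m r by simp
qed

theorem proposition2:
  fixes Sig :: "'a set" and n :: nat and \<rho>1 \<rho>2 \<rho>3 \<epsilon> :: real
  assumes "finite Sig" and "card Sig \<ge> 2" and "n \<ge> 1"
    and "\<rho>1 > 0" and "\<rho>2 > 0" and "\<rho>3 > 0" and "\<rho>1 + \<rho>2 + \<rho>3 \<le> 1"
    and "0 < \<epsilon>" and "\<epsilon> < 1"
  shows "(\<exists>t. mixed Sig n \<rho>1 \<rho>2 \<rho>3 \<epsilon> t) \<and>
    real (mixing_time Sig n \<rho>1 \<rho>2 \<rho>3 \<epsilon>) \<le>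
      max (real_of_int \<lceil>real n / \<rho>1 * (ln (real n) + ln (1 / (\<rho>1 * \<epsilon>)))\<rceil>)
       (max (real_of_int \<lceil>real n / \<rho>2 * (ln (real n) + ln (1 / (\<rho>2 * \<epsilon>)))\<rceil>)
            (real_of_int \<lceil>real (card Sig) * real n ^ 2 / \<rho>3 *
               (ln (real (card Sig) * real n ^ 2) + ln (1 / (\<rho>3 * \<epsilon>)))\<rceil>))"
proof -
  note a = assms
  interpret chain Sig n \<rho>1 \<rho>2 \<rho>3
    by unfold_locales (use a in auto)
  define m where "m = real (card Sig) * real n ^ 2"
  have m1: "m \<ge> 1"
  proof -
    have c1: "real (card Sig) \<ge> 1" using a(2) by simp
    have c2: "real n ^ 2 \<ge> 1" using a(3) by simp
    show ?thesis unfolding m_def using mult_mono[OF c1 c2] by simp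
  qed
  have n1r: "real n \<ge> 1" using a(3) by simp
  have r1: "\<rho>1 \<le> 1" "\<rho>2 \<le> 1" "\<rho>3 \<le> 1" using a(4-7) by auto
  define E1 where "E1 = real n / \<rho>1 * (ln (real n) + ln (1 / (\<rho>1 * \<epsilon>)))"
  define E2 where "E2 = real n / \<rho>2 * (ln (real n) + ln (1 / (\<rho>2 * \<epsilon>)))"
  define E3 where "E3 = m / \<rho>3 * (ln m + ln (1 / (\<rho>3 * \<epsilon>)))"
  have E: "0 \<le> E1" "0 \<le> E2" "0 \<le> E3"
    unfolding E1_def E2_def E3_def using E_nonneg n1r m1 a(4-6,8,9) r1 by auto
  define M where "M = max \<lceil>E1\<rceil> (max \<lceil>E2\<rceil> \<lceil>E3\<rceil>)"
  define T where "T = nat M"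
  have M0: "M \<ge> 0" unfolding M_def using E by (simp add: le_max_iff_disj)
  have TM: "real T = real_of_int M" unfolding T_def using M0 by simp
  have T1: "real T \<ge> E1" "real T \<ge> E2" "real T \<ge> E3" unfolding TM M_def
    by (meson le_of_int_ceiling max.cobounded1 max.cobounded2 of_int_le_iff order_trans)+
  have b1: "real n * (1 - \<rho>1 / real n)^T \<le> \<rho>1 * \<epsilon>"
    using arith_term[OF n1r a(4) r1(1) a(8)] T1(1) unfolding E1_def by blast
  have b2: "real n * (1 - \<rho>2 / real n)^T \<le> \<rho>2 * \<epsilon>"
    using arith_term[OF n1r a(5) r1(2) a(8)] T1(2) unfolding E2_def by blast
  have b3: "m * (1 - \<rho>3 / m)^T \<le> \<rho>3 * \<epsilon>"
    using arith_term[OF m1 a(6) r1(3) a(8)] T1(3) unfolding E3_def by blast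
  have cp: "real (card ({1..n} \<times> Sig \<times> {1..n})) = m"
    unfolding m_def by (simp add: card_cartesian_product power2_eq_square)
  have sumC: "(\<Sum>c\<in>C. (1 - w c)^T) = real n * (1 - \<rho>1 / real n)^T + real n * (1 - \<rho>2 / real n)^T
     + m * (1 - \<rho>3 / m)^T"
    unfolding sum_coords[OF a(1)] using cp by (simp add: wt_def m_def)
  have mix: "mixed Sig n \<rho>1 \<rho>2 \<rho>3 \<epsilon> T"
    unfolding mixed_def
  proof
    fix x assume x: "x \<in> V"
    have "tv_dist Sig n \<rho>1 \<rho>2 \<rho>3 T x \<le> (\<Sum>c\<in>C. (1 - w c)^T)" by (rule tv_bound[OF x])
    also have "\<dots> \<le> \<rho>1 * \<epsilon> + \<rho>2 * \<epsilon> + \<rho>3 * \<epsilon>" unfolding sumC using b1 b2 b3 by linarith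
    also have "\<dots> = (\<rho>1 + \<rho>2 + \<rho>3) * \<epsilon>" by (simp add: algebra_simps)
    also have "\<dots> \<le> 1 * \<epsilon>" using a(7,8) by (intro mult_right_mono) auto
    finally show "tv_dist Sig n \<rho>1 \<rho>2 \<rho>3 T x \<le> \<epsilon>" by simp
  qed
  have "mixing_time Sig n \<rho>1 \<rho>2 \<rho>3 \<epsilon> \<le> T"
    unfolding mixing_time_def by (rule Least_le) (rule mix)
  hence "real (mixing_time Sig n \<rho>1 \<rho>2 \<rho>3 \<epsilon>) \<le> real T" by simp
  also have "real T = max (real_of_int \<lceil>E1\<rceil>) (max (real_of_int \<lceil>E2\<rceil>) (real_of_int \<lceil>E3\<rceil>))"
    unfolding TM M_def by simp
  finally show ?thesis using mix unfolding E1_def E2_def E3_def m_def by blast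
qed



end
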